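(* For any basic categorized domain with $p\geq 2$, any strategy-proof, non-bossy, and category-wise neutral allocation mechanism is Pareto optimal.
   Context: Basic categorized domain: $n$ agents $\{1,\ldots,n\}$, $p$ categories $D_i=\{1,\ldots,n\}$ of indivisible items, bundles $\mathfrak D=D_1\times\cdots\times D_p$, $[\vec d]_i$ the $i$-th component. Each agent $j$ has a linear order $R_j$ over $\mathfrak D$; a profile is $P=(R_1,\ldots,R_n)$ and $(R_j',R_{-j})$ replaces $R_j$ by $R_j'$. An allocation is a map $A:\{1,\ldots,n\}\to\mathfrak D$ with $\{[A(1)]_i,\ldots,[A(n)]_i\}=D_i$ for each $i$. An allocation mechanism $f$ maps profiles to allocations; $f^j(P)$ is agent $j$'s bundle. Strategy-proofness: for all $P,j,R_j'$, $f^j(P)$ is ranked weakly above $f^j(R_j',R_{-j})$ in $R_j$. Non-bossiness: for all $P,j,R_j'$, if $f^j(P)=f^j(R_j',R_{-j})$ then $f(P)=f(R_j',R_{-j})$. Category-wise neutrality: for all $P$, categories $i$ and permutations $M_i$ of $D_i$, $f(M_i(P))=M_i(f(P))$, where $M_i(\vec d)=(M_i([\vec d]_i),[\vec d]_{-i})$ on bundles, extended to linear orders by relabeling bundles, to profiles componentwise, and to allocations by applying it to each agent's bundle. Pareto optimality: for every profile $P$ there is no allocation $A$ such that every agent $j$ ranks $A(j)$ weakly above $f^j(P)$ in $R_j$ and at least one agent ranks $A(j)$ strictly above $f^j(P)$. *)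

theory Defs
  imports Main
begin

text \<open>Agents are 1..n; categories are 1..p; each category D_i = {1..n}.
  A bdl is a function from categories to items, extensional (undefined)
  outside the categories.\<close>

type_synonym bdl = "nat \<Rightarrow> nat"
(* (x,y) in R means: y is ranked weakly above x *)
type_synonym pref = "(bdl \<times> bdl) set"
type_synonym profile = "nat \<Rightarrow> pref"
type_synonym allocation = "nat \<Rightarrow> bdl"
type_synonym mechanism = "profile \<Rightarrow> allocation"

definition agents :: "nat \<Rightarrow> nat set" where
  "agents n = {1..n}"

definition categories :: "nat \<Rightarrow> nat set" where
  "categories p = {1..p}"

definition bundles :: "nat \<Rightarrow> nat \<Rightarrow> bdl set" where
  "bundles n p = {d. (\<forall>i\<in>categories p. d i \<in> {1..n}) \<and> (\<forall>i. i \<notin> categories p \<longrightarrow> d i = undefined)}"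

definition weakly_above :: "pref \<Rightarrow> bdl \<Rightarrow> bdl \<Rightarrow> bool" where
  "weakly_above R a b \<longleftrightarrow> (b, a) \<in> R"

definition strictly_above :: "pref \<Rightarrow> bdl \<Rightarrow> bdl \<Rightarrow> bool" where
  "strictly_above R a b \<longleftrightarrow> (b, a) \<in> R \<and> a \<noteq> b"

definition is_pref :: "nat \<Rightarrow> nat \<Rightarrow> pref \<Rightarrow> bool" where
  "is_pref n p R \<longleftrightarrow> linear_order_on (bundles n p) R \<and> R \<subseteq> bundles n p \<times> bundles n p"

definition is_profile :: "nat \<Rightarrow> nat \<Rightarrow> profile \<Rightarrow> bool" where
  "is_profile n p P \<longleftrightarrow> (\<forall>j\<in>agents n. is_pref n p (P j)) \<and> (\<forall>j. j \<notin> agents n \<longrightarrow> P j = {})"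

definition is_allocation :: "nat \<Rightarrow> nat \<Rightarrow> allocation \<Rightarrow> bool" where
  "is_allocation n p A \<longleftrightarrow> (\<forall>j\<in>agents n. A j \<in> bundles n p)
     \<and> (\<forall>j. j \<notin> agents n \<longrightarrow> A j = undefined)
     \<and> (\<forall>i\<in>categories p. (\<lambda>j. A j i) ` agents n = {1..n})"

definition is_mechanism :: "nat \<Rightarrow> nat \<Rightarrow> mechanism \<Rightarrow> bool" where
  "is_mechanism n p f \<longleftrightarrow> (\<forall>P. is_profile n p P \<longrightarrow> is_allocation n p (f P))"

definition strategy_proof :: "nat \<Rightarrow> nat \<Rightarrow> mechanism \<Rightarrow> bool" where
  "strategy_proof n p f \<longleftrightarrow>
     (\<forall>P j R'. is_profile n p P \<longrightarrow> j \<in> agents n \<longrightarrow> is_pref n p R' \<longrightarrow>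
        weakly_above (P j) (f P j) (f (P(j := R')) j))"

definition non_bossy :: "nat \<Rightarrow> nat \<Rightarrow> mechanism \<Rightarrow> bool" where
  "non_bossy n p f \<longleftrightarrow>
     (\<forall>P j R'. is_profile n p P \<longrightarrow> j \<in> agents n \<longrightarrow> is_pref n p R' \<longrightarrow>
        f P j = f (P(j := R')) j \<longrightarrow> f P = f (P(j := R')))"

definition perm_bundle :: "nat \<Rightarrow> (nat \<Rightarrow> nat) \<Rightarrow> bdl \<Rightarrow> bdl" where
  "perm_bundle i M d = d(i := M (d i))"

definition perm_pref :: "nat \<Rightarrow> (nat \<Rightarrow> nat) \<Rightarrow> pref \<Rightarrow> pref" where
  "perm_pref i M R = (\<lambda>(x, y). (perm_bundle i M x, perm_bundle i M y)) ` R"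

definition perm_profile :: "nat \<Rightarrow> nat \<Rightarrow> (nat \<Rightarrow> nat) \<Rightarrow> profile \<Rightarrow> profile" where
  "perm_profile n i M P = (\<lambda>j. if j \<in> agents n then perm_pref i M (P j) else P j)"

definition perm_alloc :: "nat \<Rightarrow> nat \<Rightarrow> (nat \<Rightarrow> nat) \<Rightarrow> allocation \<Rightarrow> allocation" where
  "perm_alloc n i M A = (\<lambda>j. if j \<in> agents n then perm_bundle i M (A j) else A j)"

definition category_neutral :: "nat \<Rightarrow> nat \<Rightarrow> mechanism \<Rightarrow> bool" where
  "category_neutral n p f \<longleftrightarrow>
     (\<forall>P i M. is_profile n p P \<longrightarrow> i \<in> categories p \<longrightarrow> bij_betw M {1..n} {1..n} \<longrightarrow>
        f (perm_profile n i M P) = perm_alloc n i M (f P))"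

definition pareto_optimal :: "nat \<Rightarrow> nat \<Rightarrow> mechanism \<Rightarrow> bool" where
  "pareto_optimal n p f \<longleftrightarrow>
     (\<forall>P. is_profile n p P \<longrightarrow>
        \<not> (\<exists>A. is_allocation n p A
              \<and> (\<forall>j\<in>agents n. weakly_above (P j) (A j) (f P j))
              \<and> (\<exists>j\<in>agents n. strictly_above (P j) (A j) (f P j))))"

end

theory Submission imports Defs begin

lemma is_pref_iff:
  "is_pref n p R \<longleftrightarrow> R \<subseteq> bundles n p \<times> bundles n p \<and> (\<forall>x\<in>bundles n p. (x,x)\<in>R)
     \<and> trans R \<and> antisym R \<and> total_on (bundles n p) R"
  unfolding is_pref_def linear_order_on_def partial_order_on_def preorder_on_def refl_on_def
  by blast

definition totop :: "bdl set \<Rightarrow> bdl \<Rightarrow> pref \<Rightarrow> pref" where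
  "totop D a R = {(x,y). (x,y) \<in> R \<and> x \<noteq> a \<and> y \<noteq> a} \<union> {(x,y). x \<in> D \<and> y = a}"

lemma totop_pref:
  assumes "is_pref n p R" "a \<in> bundles n p"
  shows "is_pref n p (totop (bundles n p) a R)"
proof -
  let ?D = "bundles n p"
  have R: "R \<subseteq> ?D \<times> ?D" "\<forall>x\<in>?D. (x,x)\<in>R" "trans R" "antisym R" "total_on ?D R"
    using assms(1) unfolding is_pref_iff by auto
  show ?thesis unfolding is_pref_iff
  proof (intro conjI)
    show "totop ?D a R \<subseteq> ?D \<times> ?D" using R(1) assms(2) unfolding totop_def by auto
    show "\<forall>x\<in>?D. (x,x)\<in>totop ?D a R" using R(2) unfolding totop_def by auto
    show "trans (totop ?D a R)" using R(1) R(3) unfolding totop_def trans_def by auto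
    show "antisym (totop ?D a R)" using R(4) unfolding totop_def antisym_def by blast
    show "total_on ?D (totop ?D a R)" using R(5) unfolding totop_def total_on_def by blast
  qed
qed

lemma image_pref:
  assumes "is_pref n p R" "bij_betw g (bundles n p) (bundles n p)"
  shows "is_pref n p ((\<lambda>(x,y). (g x, g y)) ` R)"
proof -
  let ?D = "bundles n p"
  have R: "R \<subseteq> ?D \<times> ?D" "\<forall>x\<in>?D. (x,x)\<in>R" "trans R" "antisym R" "total_on ?D R"
    using assms(1) unfolding is_pref_iff by auto
  have inj: "inj_on g ?D" and im: "g ` ?D = ?D" using assms(2) by (auto simp: bij_betw_def)
  let ?S = "(\<lambda>(x,y). (g x, g y)) ` R"
  have mem: "(g x, g y) \<in> ?S \<longleftrightarrow> (x,y) \<in> R" if "x \<in> ?D" "y \<in> ?D" for x y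
  proof
    assume "(g x, g y) \<in> ?S"
    then obtain u v where "(u,v) \<in> R" "g x = g u" "g y = g v" by auto
    moreover have "u \<in> ?D" "v \<in> ?D" using \<open>(u,v) \<in> R\<close> R(1) by auto
    ultimately show "(x,y) \<in> R" using inj that by (metis inj_on_def)
  qed auto
  have sub: "?S \<subseteq> ?D \<times> ?D" using R(1) im by auto
  show ?thesis unfolding is_pref_iff
  proof (intro conjI sub)
    show "\<forall>x\<in>?D. (x,x)\<in>?S"
    proof
      fix x assume "x \<in> ?D"
      then obtain u where "u \<in> ?D" "x = g u" using im by auto
      thus "(x,x) \<in> ?S" using R(2) by auto
    qed
    show "trans ?S" unfolding trans_def
    proof (intro allI impI)
      fix x y z assume "(x,y) \<in> ?S" "(y,z) \<in> ?S"
      then obtain a b c d where "(a,b)\<in>R" "x = g a" "y = g b" "(c,d)\<in>R" "y = g c" "z = g d" by auto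
      moreover have "b = c" using calculation R(1) inj by (auto simp: inj_on_def)
      ultimately show "(x,z) \<in> ?S" using R(3) by (auto dest: transD)
    qed
    show "antisym ?S" unfolding antisym_def
    proof (intro allI impI)
      fix x y assume "(x,y) \<in> ?S" "(y,x) \<in> ?S"
      then obtain a b where ab: "(a,b)\<in>R" "x = g a" "y = g b" by auto
      have "a \<in> ?D" "b \<in> ?D" using ab R(1) by auto
      hence "(b,a) \<in> R" using mem \<open>(y,x) \<in> ?S\<close> ab by auto
      thus "x = y" using ab R(4) by (auto dest: antisymD)
    qed
    show "total_on ?D ?S" unfolding total_on_def
    proof (intro ballI impI)
      fix x y assume "x \<in> ?D" "y \<in> ?D" "x \<noteq> y"
      then obtain a b where "a \<in> ?D" "b \<in> ?D" "x = g a" "y = g b" using im by (metis imageE)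
      thus "(x,y) \<in> ?S \<or> (y,x) \<in> ?S" using R(5) \<open>x \<noteq> y\<close> mem unfolding total_on_def by metis
    qed
  qed
qed

lemma perm_bundle_bij:
  assumes "c \<in> categories p" "bij_betw M {1..n} {1..n}"
  shows "bij_betw (perm_bundle c M) (bundles n p) (bundles n p)"
proof -
  have inj: "inj_on M {1..n}" and im: "M ` {1..n} = {1..n}" using assms(2) by (auto simp: bij_betw_def)
  show ?thesis unfolding bij_betw_def
  proof
    show "inj_on (perm_bundle c M) (bundles n p)"
    proof (rule inj_onI)
      fix d e assume d: "d \<in> bundles n p" and e: "e \<in> bundles n p" and eq: "perm_bundle c M d = perm_bundle c M e"
      have "M (d c) = M (e c)" using eq unfolding perm_bundle_def by (metis fun_upd_same)
      hence "d c = e c" using inj d e assms(1) unfolding bundles_def by (auto simp: inj_on_def)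
      thus "d = e" using eq unfolding perm_bundle_def by (metis fun_upd_triv fun_upd_upd)
    qed
    show "perm_bundle c M ` bundles n p = bundles n p"
    proof
      show "perm_bundle c M ` bundles n p \<subseteq> bundles n p"
        using im assms(1) unfolding perm_bundle_def bundles_def by auto
      show "bundles n p \<subseteq> perm_bundle c M ` bundles n p"
      proof
        fix e assume e: "e \<in> bundles n p"
        hence ec: "e c \<in> {1..n}" using assms(1) unfolding bundles_def by auto
        then obtain u where u: "u \<in> {1..n}" "M u = e c" using im by (metis imageE)
        let ?d = "e(c := u)"
        have "?d \<in> bundles n p" using e u assms(1) unfolding bundles_def by auto
        moreover have "perm_bundle c M ?d = e" unfolding perm_bundle_def using u by auto
        ultimately show "e \<in> perm_bundle c M ` bundles n p" by (metis imageI)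
      qed
    qed
  qed
qed

lemma perm_profile_profile:
  assumes "is_profile n p P" "c \<in> categories p" "bij_betw M {1..n} {1..n}"
  shows "is_profile n p (perm_profile n c M P)"
  using assms image_pref[OF _ perm_bundle_bij[OF assms(2,3)]]
  unfolding is_profile_def perm_profile_def perm_pref_def by auto

lemma replace_all:
  assumes PQ: "is_profile n p Q" and PQ': "is_profile n p Q'" and fQ: "f Q = C"
    and step: "\<And>X k. is_profile n p X \<Longrightarrow> f X = C \<Longrightarrow> k \<in> agents n \<Longrightarrow> X k = Q k
                 \<Longrightarrow> f (X(k := Q' k)) = C"
  shows "f Q' = C"
proof -
  define H where "H m = (\<lambda>j. if 1 \<le> j \<and> j \<le> m then Q' j else Q j)" for m
  have prof: "is_profile n p (H m)" for m
    using PQ PQ' unfolding is_profile_def H_def by auto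
  have "f (H m) = C" for m
  proof (induction m)
    case 0
    have "H 0 = Q" unfolding H_def by (auto simp: fun_eq_iff)
    then show ?case using fQ by simp
  next
    case (Suc m)
    show ?case
    proof (cases "Suc m \<le> n")
      case True
      have a: "Suc m \<in> agents n" using True unfolding agents_def by auto
      have e1: "H (Suc m) = (H m)(Suc m := Q' (Suc m))" unfolding H_def by (auto simp: fun_eq_iff)
      have e2: "H m (Suc m) = Q (Suc m)" unfolding H_def by auto
      show ?thesis using step[OF prof Suc a e2] e1 by metis
    next
      case False
      hence eq: "Q' (Suc m) = Q (Suc m)" using PQ PQ' unfolding is_profile_def agents_def by auto
      have "H (Suc m) j = H m j" for j
      proof (cases "j = Suc m")
        case True then show ?thesis using eq unfolding H_def by simp
      next
        case False then show ?thesis unfolding H_def by (simp add: le_Suc_eq)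
      qed
      hence "H (Suc m) = H m" by blast
      then show ?thesis using Suc by simp
    qed
  qed
  moreover have "H n j = Q' j" for j
  proof (cases "1 \<le> j \<and> j \<le> n")
    case True then show ?thesis unfolding H_def by simp
  next
    case False
    hence "j \<notin> agents n" unfolding agents_def by simp
    hence "Q j = {}" "Q' j = {}" using PQ PQ' unfolding is_profile_def by auto
    then show ?thesis using False unfolding H_def by simp
  qed
  ultimately show ?thesis by (metis ext)
qed

lemma alloc_inj:
  assumes "is_allocation n p A" "c \<in> categories p"
  shows "bij_betw (\<lambda>k. A k c) (agents n) {1..n}"
proof -
  have im: "(\<lambda>k. A k c) ` agents n = {1..n}" using assms unfolding is_allocation_def by auto
  have "card (agents n) = n" unfolding agents_def by simp
  hence "card ((\<lambda>k. A k c) ` agents n) = card (agents n)" using im by simp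
  hence "inj_on (\<lambda>k. A k c) (agents n)" by (simp add: inj_on_iff_eq_card agents_def)
  thus ?thesis using im by (simp add: bij_betw_def)
qed

theorem lemma3:
  fixes n p :: nat and f :: mechanism
  assumes "p \<ge> 2"
    and mech: "is_mechanism n p f"
    and sp: "strategy_proof n p f"
    and nb: "non_bossy n p f"
    and neu: "category_neutral n p f"
  shows "pareto_optimal n p f"
  unfolding pareto_optimal_def
proof (intro allI impI notI)
  fix P assume PP: "is_profile n p P"
  assume "\<exists>A. is_allocation n p A \<and> (\<forall>j\<in>agents n. weakly_above (P j) (A j) (f P j))
              \<and> (\<exists>j\<in>agents n. strictly_above (P j) (A j) (f P j))"
  then obtain A where AA: "is_allocation n p A"
    and dom: "\<forall>j\<in>agents n. (f P j, A j) \<in> P j"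
    and str: "\<exists>j\<in>agents n. A j \<noteq> f P j"
    unfolding weakly_above_def strictly_above_def by blast
  define B where "B = f P"
  have BA: "is_allocation n p B" using mech PP unfolding is_mechanism_def B_def by auto
  let ?D = "bundles n p"
  have Ab: "A k \<in> ?D" if "k \<in> agents n" for k using AA that unfolding is_allocation_def by auto
  define P' where "P' = (\<lambda>j. if j \<in> agents n then totop ?D (A j) (P j) else P j)"
  have PP': "is_profile n p P'"
    using PP Ab totop_pref unfolding is_profile_def P'_def by auto
  have topP': "(x, A k) \<in> P' k" if "k \<in> agents n" "x \<in> ?D" for k x
    using that unfolding P'_def totop_def by auto
  have fP': "f P' = B"
  proof (rule replace_all[OF PP PP'])
    show "f P = B" by (simp add: B_def)
  next
    fix X k assume X: "is_profile n p X" "f X = B" "k \<in> agents n" "X k = P k"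
    let ?R = "P' k"
    have R: "is_pref n p ?R" using PP' X(3) unfolding is_profile_def by auto
    have RR: "?R = totop ?D (A k) (P k)" using X(3) unfolding P'_def by simp
    let ?X' = "X(k := ?R)"
    have PX: "is_pref n p (P k)" using PP X(3) unfolding is_profile_def by auto
    have "weakly_above (X k) (f X k) (f ?X' k)" using sp X R unfolding strategy_proof_def by blast
    hence h1: "(f ?X' k, B k) \<in> P k" using X unfolding weakly_above_def by simp
    have X'p: "is_profile n p ?X'" using X R unfolding is_profile_def by auto
    have "weakly_above ?R (f ?X' k) (f (?X'(k := X k)) k)"
      using sp[unfolded strategy_proof_def, rule_format, OF X'p X(3), of "X k"] PX X(4) by simp
    moreover have "?X'(k := X k) = X" by simp
    ultimately have h2: "(B k, f ?X' k) \<in> ?R" using X unfolding weakly_above_def by simp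
    have anti: "antisym (P k)" using PX unfolding is_pref_iff by auto
    have "(B k, A k) \<in> P k" using dom X(3) B_def by auto
    hence "f ?X' k = B k" using h1 h2 anti unfolding RR totop_def by (auto dest: antisymD)
    hence "f X k = f ?X' k" using X by simp
    hence "f X = f ?X'" using nb X R unfolding non_bossy_def by blast
    thus "f ?X' = B" using X by simp
  qed
  have "\<forall>c\<in>categories p. \<exists>M. bij_betw M {1..n} {1..n} \<and> (\<forall>k\<in>agents n. M (B k c) = A k c)"
  proof
    fix c assume c: "c \<in> categories p"
    let ?g = "\<lambda>k. B k c"
    have gb: "bij_betw ?g (agents n) {1..n}" using alloc_inj[OF BA c] .
    have hb: "bij_betw (\<lambda>k. A k c) (agents n) {1..n}" using alloc_inj[OF AA c] .
    have ib: "bij_betw (inv_into (agents n) ?g) {1..n} (agents n)" using gb by (rule bij_betw_inv_into)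
    define M where "M = (\<lambda>k. A k c) \<circ> inv_into (agents n) ?g"
    have "bij_betw M {1..n} {1..n}" unfolding M_def using bij_betw_trans[OF ib hb] .
    moreover have "\<forall>k\<in>agents n. M (B k c) = A k c"
    proof
      fix k assume "k \<in> agents n"
      moreover have "inj_on ?g (agents n)" using gb unfolding bij_betw_def by auto
      ultimately have "inv_into (agents n) ?g (?g k) = k" by (rule inv_into_f_f[rotated])
      thus "M (B k c) = A k c" unfolding M_def by simp
    qed
    ultimately show "\<exists>M. bij_betw M {1..n} {1..n} \<and> (\<forall>k\<in>agents n. M (B k c) = A k c)" by blast
  qed
  then obtain \<pi> where pi: "\<And>c. c \<in> categories p \<Longrightarrow> bij_betw (\<pi> c) {1..n} {1..n}"
      "\<And>c k. c \<in> categories p \<Longrightarrow> k \<in> agents n \<Longrightarrow> \<pi> c (B k c) = A k c"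
    by metis
  define Prof where "Prof = rec_nat P' (\<lambda>m Q. perm_profile n (Suc m) (\<pi> (Suc m)) Q)"
  have Prof0: "Prof 0 = P'" and ProfS: "Prof (Suc m) = perm_profile n (Suc m) (\<pi> (Suc m)) (Prof m)" for m
    unfolding Prof_def by simp_all
  define mix where "mix m k = (\<lambda>c. if c \<in> {1..m} then A k c else B k c)" for m k
  have inv: "m \<le> p \<Longrightarrow> is_profile n p (Prof m) \<and> (\<forall>k\<in>agents n. f (Prof m) k = mix m k)" for m
  proof (induction m)
    case 0 then show ?case using PP' fP' unfolding Prof0 mix_def by auto
  next
    case (Suc m)
    hence IH: "is_profile n p (Prof m)" "\<forall>k\<in>agents n. f (Prof m) k = mix m k" by auto
    have c: "Suc m \<in> categories p" using Suc.prems unfolding categories_def by auto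
    have "is_profile n p (Prof (Suc m))" unfolding ProfS using perm_profile_profile[OF IH(1) c pi(1)[OF c]] .
    moreover have "f (Prof (Suc m)) = perm_alloc n (Suc m) (\<pi> (Suc m)) (f (Prof m))"
      unfolding ProfS using neu IH(1) c pi(1)[OF c] unfolding category_neutral_def by blast
    hence "\<forall>k\<in>agents n. f (Prof (Suc m)) k = mix (Suc m) k"
      using IH(2) pi(2)[OF c] unfolding perm_alloc_def perm_bundle_def mix_def by (auto simp: fun_eq_iff)
    ultimately show ?case by blast
  qed
  have "f (Prof p) = A"
  proof
    fix k
    show "f (Prof p) k = A k"
    proof (cases "k \<in> agents n")
      case True
      have "f (Prof p) k = mix p k" using inv[of p] True by auto
      also have "\<dots> = A k"
      proof
        fix c show "mix p k c = A k c"
        proof (cases "c \<in> {1..p}")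
          case False
          hence "c \<notin> categories p" unfolding categories_def .
          moreover have "A k \<in> ?D" "B k \<in> ?D" using AA BA True unfolding is_allocation_def by auto
          ultimately show ?thesis using False unfolding mix_def bundles_def by auto
        qed (simp add: mix_def)
      qed
      finally show ?thesis .
    next
      case False
      have "is_allocation n p (f (Prof p))" using inv[of p] mech unfolding is_mechanism_def by auto
      thus ?thesis using False AA unfolding is_allocation_def by auto
    qed
  qed
  have "f P' = A"
  proof (rule replace_all[OF _ PP'])
    show "is_profile n p (Prof p)" using inv[of p] by auto
    show "f (Prof p) = A" by fact
  next
    fix X k assume X: "is_profile n p X" "f X = A" "k \<in> agents n"
    let ?R = "P' k"
    have R: "is_pref n p ?R" using PP' X(3) unfolding is_profile_def by auto
    let ?X' = "X(k := ?R)"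
    have X'p: "is_profile n p ?X'" using X R unfolding is_profile_def by auto
    have PX: "is_pref n p (X k)" using X unfolding is_profile_def by auto
    have "weakly_above ?R (f ?X' k) (f (?X'(k := X k)) k)"
      using sp[unfolded strategy_proof_def, rule_format, OF X'p X(3) PX] by simp
    moreover have "?X'(k := X k) = X" by simp
    ultimately have h2: "(A k, f ?X' k) \<in> ?R" using X unfolding weakly_above_def by simp
    have "is_allocation n p (f ?X')" using mech X'p unfolding is_mechanism_def by auto
    hence "f ?X' k \<in> ?D" using X(3) unfolding is_allocation_def by auto
    hence h1: "(f ?X' k, A k) \<in> ?R" using topP' X(3) by auto
    have "antisym ?R" using R unfolding is_pref_iff by auto
    hence "f ?X' k = A k" using h1 h2 by (auto dest: antisymD)
    hence "f X k = f ?X' k" using X by simp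
    hence "f X = f ?X'" using nb X R unfolding non_bossy_def by blast
    thus "f ?X' = A" using X by simp
  qed
  hence "A = B" using fP' by simp
  thus False using str B_def by auto
qed

end
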